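(* Let $n\ge1$ and let $A\subseteq\mathbb{R}^n$ (Euclidean norm) be a nonempty approximately convex set with $\mathcal{H}(A,\operatorname{Co}(A))\ge\log_2 n-1$. Then for every integer $j$ with $1\le j\le n$, $$\operatorname{diam}(A)\ge\frac{(\log_2 n-1-\lceil\log_2 j\rceil)\sqrt j}{\sqrt{n-j+1}}\,\sqrt n .$$ In particular $\operatorname{diam}(A)\ge0.7525\sqrt n$ for all $n\ge20$, and $\operatorname{diam}(A)\ge0.768\sqrt n$ for all sufficiently large $n$.
   Context: A set $A$ is approximately convex if $d(tx+(1-t)y,A)\le1$ for all $x,y\in A$, $t\in[0,1]$, where $d(x,A)=\inf_{a\in A}\|x-a\|$. $\mathcal{H}$ is the Hausdorff distance, $\operatorname{Co}$ the convex hull, $\operatorname{diam}(A)=\sup\{\|x-y\|:x,y\in A\}$, and $\lceil x\rceil$ the least integer $\ge x$. *)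

theory Defs
  imports "HOL-Analysis.Analysis"
begin

text \<open>Euclidean space R^n is represented concretely as the functions nat => real
  vanishing outside the coordinates 0..n-1 (so that the dimension n can be
  quantified inside a formula).\<close>

definition Rn :: "nat \<Rightarrow> (nat \<Rightarrow> real) set" where
  "Rn n = {x. \<forall>i\<ge>n. x i = 0}"

definition enorm :: "nat \<Rightarrow> (nat \<Rightarrow> real) \<Rightarrow> real" where
  "enorm n x = sqrt (\<Sum>i<n. (x i)\<^sup>2)"

definition edist :: "nat \<Rightarrow> (nat \<Rightarrow> real) \<Rightarrow> (nat \<Rightarrow> real) \<Rightarrow> real" where
  "edist n x y = enorm n (\<lambda>i. x i - y i)"

definition cmb :: "real \<Rightarrow> (nat \<Rightarrow> real) \<Rightarrow> (nat \<Rightarrow> real) \<Rightarrow> (nat \<Rightarrow> real)" where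
  "cmb t x y = (\<lambda>i. t * x i + (1 - t) * y i)"

definition convexR :: "(nat \<Rightarrow> real) set \<Rightarrow> bool" where
  "convexR S \<longleftrightarrow> (\<forall>x\<in>S. \<forall>y\<in>S. \<forall>t\<in>{0..1}. cmb t x y \<in> S)"

definition Co :: "(nat \<Rightarrow> real) set \<Rightarrow> (nat \<Rightarrow> real) set" where
  "Co A = convexR hull A"

definition setd :: "nat \<Rightarrow> (nat \<Rightarrow> real) \<Rightarrow> (nat \<Rightarrow> real) set \<Rightarrow> real" where
  "setd n x A = (INF a\<in>A. edist n x a)"

definition approx_convex :: "nat \<Rightarrow> (nat \<Rightarrow> real) set \<Rightarrow> bool" where
  "approx_convex n A \<longleftrightarrow> (\<forall>x\<in>A. \<forall>y\<in>A. \<forall>t\<in>{0..1}. setd n (cmb t x y) A \<le> 1)"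

text \<open>Hausdorff distance and diameter, valued in the extended reals
  (they are +infinity for unbounded sets).\<close>
definition hausd :: "nat \<Rightarrow> (nat \<Rightarrow> real) set \<Rightarrow> (nat \<Rightarrow> real) set \<Rightarrow> ereal" where
  "hausd n A B = max (SUP a\<in>A. ereal (setd n a B)) (SUP b\<in>B. ereal (setd n b A))"

definition diam :: "nat \<Rightarrow> (nat \<Rightarrow> real) set \<Rightarrow> ereal" where
  "diam n A = (SUP p\<in>A \<times> A. ereal (edist n (fst p) (snd p)))"

end

theory Submission
  imports Defs
begin

lemma enorm_L2: "enorm n x = L2_set x {..<n}"
  by (simp add: enorm_def L2_set_def)

lemma enorm_nonneg: "0 \<le> enorm n x"
  by (simp add: enorm_def sum_nonneg)

lemma edist_nonneg: "0 \<le> edist n x y"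
  by (simp add: edist_def enorm_nonneg)

lemma edist_self: "edist n x x = 0"
  by (simp add: edist_def enorm_def)

lemma edist_sym: "edist n x y = edist n y x"
proof -
  have "(\<Sum>i<n. (x i - y i)\<^sup>2) = (\<Sum>i<n. (y i - x i)\<^sup>2)"
    by (rule sum.cong) (auto simp: power2_commute)
  then show ?thesis by (simp add: edist_def enorm_def)
qed

lemma edist_triangle: "edist n x z \<le> edist n x y + edist n y z"
proof -
  have "L2_set (\<lambda>i. (x i - y i) + (y i - z i)) {..<n} \<le> L2_set (\<lambda>i. x i - y i) {..<n} + L2_set (\<lambda>i. y i - z i) {..<n}"
    by (rule L2_set_triangle_ineq)
  then show ?thesis by (simp add: edist_def enorm_L2)
qed

lemma edist_cmb:
  assumes "0 \<le> t" "t \<le> 1"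
  shows "edist n (cmb t y1 y2) (cmb t b1 b2) \<le> t * edist n y1 b1 + (1 - t) * edist n y2 b2"
proof -
  have "edist n (cmb t y1 y2) (cmb t b1 b2) = L2_set (\<lambda>i. t * (y1 i - b1 i) + (1 - t) * (y2 i - b2 i)) {..<n}"
    by (simp add: edist_def enorm_L2 cmb_def algebra_simps)
  also have "\<dots> \<le> L2_set (\<lambda>i. t * (y1 i - b1 i)) {..<n} + L2_set (\<lambda>i. (1 - t) * (y2 i - b2 i)) {..<n}"
    by (rule L2_set_triangle_ineq)
  also have "\<dots> = t * edist n y1 b1 + (1 - t) * edist n y2 b2"
    using assms by (simp add: L2_set_right_distrib edist_def enorm_L2)
  finally show ?thesis .
qed

lemma bdd_edist: "bdd_below (edist n x ` A)"
  by (rule bdd_belowI[of _ 0]) (auto simp: edist_nonneg)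

lemma setd_le: "a \<in> A \<Longrightarrow> setd n x A \<le> edist n x a"
  unfolding setd_def by (rule cInf_lower) (auto simp: bdd_edist)

lemma setd_lessD: "A \<noteq> {} \<Longrightarrow> setd n x A < c \<Longrightarrow> \<exists>a\<in>A. edist n x a < c"
  unfolding setd_def using cInf_lessD[of "edist n x ` A" c] by auto

lemma setd_nonneg: "A \<noteq> {} \<Longrightarrow> 0 \<le> setd n x A"
  unfolding setd_def by (rule cINF_greatest) (auto simp: edist_nonneg)

lemma setd_triangle:
  assumes "A \<noteq> {}"
  shows "setd n x A \<le> edist n x y + setd n y A"
proof -
  have "setd n x A - edist n x y \<le> setd n y A"
    unfolding setd_def[of n y]
  proof (rule cINF_greatest[OF assms])
    fix a assume "a \<in> A"
    have "setd n x A \<le> edist n x a" by (rule setd_le[OF \<open>a \<in> A\<close>])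
    also have "\<dots> \<le> edist n x y + edist n y a" by (rule edist_triangle)
    finally show "setd n x A - edist n x y \<le> edist n y a" by simp
  qed
  then show ?thesis by simp
qed

definition avg :: "(nat \<Rightarrow> nat \<Rightarrow> real) \<Rightarrow> nat \<Rightarrow> nat \<Rightarrow> real" where
  "avg p m = (\<lambda>i. (\<Sum>t<m. p t i) / real m)"

lemma sum_split_shift: fixes h d :: nat shows "(\<Sum>t<h + d. f t) = (\<Sum>t<h. f t) + (\<Sum>t<d. f (t + h))"
  by (induction d) (simp_all add: ac_simps)

lemma tree_lemma:
  assumes ac: "approx_convex n A" and ne: "A \<noteq> {}"
  shows "\<forall>p m. 1 \<le> m \<and> m \<le> 2 ^ k \<and> (\<forall>t<m. p t \<in> A) \<longrightarrow> setd n (avg p m) A \<le> real k"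
proof (induction k)
  case 0
  show ?case
  proof (intro allI impI)
    fix p and m :: nat assume h: "1 \<le> m \<and> m \<le> 2 ^ 0 \<and> (\<forall>t<m. p t \<in> A)"
    then have m1: "m = 1" by simp
    then have "avg p m = p 0" by (simp add: avg_def)
    moreover have "p 0 \<in> A" using h m1 by auto
    ultimately show "setd n (avg p m) A \<le> real 0"
      using setd_le[of "p 0" A n "p 0"] by (simp add: edist_self)
  qed
next
  case (Suc k)
  show ?case
  proof (intro allI impI)
    fix p and m :: nat assume h: "1 \<le> m \<and> m \<le> 2 ^ Suc k \<and> (\<forall>t<m. p t \<in> A)"
    show "setd n (avg p m) A \<le> real (Suc k)"
    proof (cases "m \<le> 2 ^ k")
      case True
      then show ?thesis using Suc.IH h by force
    next
      case False
      define h0 :: nat where "h0 = 2 ^ k"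
      define d where "d = m - h0"
      have mhd: "m = h0 + d" using False h0_def d_def by simp
      have h0pos: "1 \<le> h0" by (simp add: h0_def)
      have d1: "1 \<le> d" and dle: "d \<le> 2 ^ k" using False h by (auto simp: d_def h0_def)
      define q where "q = (\<lambda>t. p (t + h0))"
      have y1: "setd n (avg p h0) A \<le> real k"
        using Suc.IH h0pos h mhd by (auto simp: h0_def)
      have y2: "setd n (avg q d) A \<le> real k"
        using Suc.IH d1 dle h mhd by (auto simp: q_def)
      define t where "t = real h0 / real m"
      have t0: "0 \<le> t" and t1: "t \<le> 1" using mhd h0pos by (auto simp: t_def)
      have eq: "avg p m = cmb t (avg p h0) (avg q d)"
      proof
        fix i
        have "(\<Sum>t<m. p t i) = (\<Sum>t<h0. p t i) + (\<Sum>t<d. q t i)"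
          unfolding mhd q_def by (rule sum_split_shift)
        moreover have "1 - t = real d / real m" using mhd h by (simp add: t_def field_simps)
        moreover have "t * ((\<Sum>t<h0. p t i) / real h0) = (\<Sum>t<h0. p t i) / real m"
          using h0pos by (simp add: t_def)
        moreover have "real d / real m * ((\<Sum>t<d. q t i) / real d) = (\<Sum>t<d. q t i) / real m"
          using d1 by simp
        ultimately show "avg p m i = cmb t (avg p h0) (avg q d) i"
          by (simp add: avg_def cmb_def add_divide_distrib)
      qed
      show ?thesis
      proof (rule field_le_epsilon)
        fix e :: real assume e: "0 < e"
        obtain b1 where b1: "b1 \<in> A" "edist n (avg p h0) b1 < real k + e"
          using setd_lessD[OF ne, of n "avg p h0" "real k + e"] y1 e by auto
        obtain b2 where b2: "b2 \<in> A" "edist n (avg q d) b2 < real k + e"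
          using setd_lessD[OF ne, of n "avg q d" "real k + e"] y2 e by auto
        have c1: "setd n (cmb t b1 b2) A \<le> 1"
          using ac b1 b2 t0 t1 unfolding approx_convex_def by auto
        have "edist n (avg p m) (cmb t b1 b2) \<le> t * edist n (avg p h0) b1 + (1 - t) * edist n (avg q d) b2"
          unfolding eq by (rule edist_cmb[OF t0 t1])
        also have "\<dots> \<le> t * (real k + e) + (1 - t) * (real k + e)"
          using b1 b2 t0 t1 by (intro add_mono mult_left_mono) auto
        also have "\<dots> = real k + e" by (simp add: algebra_simps)
        finally have "edist n (avg p m) (cmb t b1 b2) \<le> real k + e" .
        then show "setd n (avg p m) A \<le> real (Suc k) + e"
          using setd_triangle[OF ne, of n "avg p m" "cmb t b1 b2"] c1 by simp
      qed
    qed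
  qed
qed

definition combs :: "(nat \<Rightarrow> real) set \<Rightarrow> (nat \<Rightarrow> real) set" where
  "combs A = {x. \<exists>F w. finite F \<and> F \<subseteq> A \<and> (\<forall>a\<in>F. 0 \<le> w a) \<and> sum w F = 1 \<and>
                 (\<forall>i. x i = (\<Sum>a\<in>F. w a * a i))}"

lemma A_sub_combs: "A \<subseteq> combs A"
proof
  fix x assume "x \<in> A"
  then show "x \<in> combs A" unfolding combs_def
    by (intro CollectI exI[of _ "{x}"] exI[of _ "\<lambda>_. 1"]) auto
qed

lemma convexR_combs: "convexR (combs A)"
  unfolding convexR_def
proof (intro ballI)
  fix x y t assume x: "x \<in> combs A" and y: "y \<in> combs A" and t: "t \<in> {0..1::real}"
  obtain F1 w1 where F1: "finite F1" "F1 \<subseteq> A" "\<forall>a\<in>F1. 0 \<le> w1 a" "sum w1 F1 = 1" "\<forall>i. x i = (\<Sum>a\<in>F1. w1 a * a i)"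
    using x unfolding combs_def by blast
  obtain F2 w2 where F2: "finite F2" "F2 \<subseteq> A" "\<forall>a\<in>F2. 0 \<le> w2 a" "sum w2 F2 = 1" "\<forall>i. y i = (\<Sum>a\<in>F2. w2 a * a i)"
    using y unfolding combs_def by blast
  define F where "F = F1 \<union> F2"
  define w where "w = (\<lambda>a. t * (if a \<in> F1 then w1 a else 0) + (1 - t) * (if a \<in> F2 then w2 a else 0))"
  have fin: "finite F" using F1 F2 by (simp add: F_def)
  have r1: "(\<Sum>a\<in>F. (if a \<in> F1 then g a else 0)) = sum g F1" for g :: "_ \<Rightarrow> real"
    using sum.inter_restrict[OF fin, of g F1] by (simp add: F_def Int_absorb1 inf.absorb2)
  have r2: "(\<Sum>a\<in>F. (if a \<in> F2 then g a else 0)) = sum g F2" for g :: "_ \<Rightarrow> real"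
    using sum.inter_restrict[OF fin, of g F2] by (simp add: F_def inf.absorb2)
  have "finite F \<and> F \<subseteq> A \<and> (\<forall>a\<in>F. 0 \<le> w a) \<and> sum w F = 1 \<and>
                 (\<forall>i. cmb t x y i = (\<Sum>a\<in>F. w a * a i))"
  proof (intro conjI allI ballI)
    show "finite F" by (rule fin)
    show "F \<subseteq> A" using F1 F2 by (auto simp: F_def)
    fix a assume "a \<in> F" then show "0 \<le> w a" using F1 F2 t by (auto simp: w_def)
  next
    have "sum w F = t * (\<Sum>a\<in>F. (if a \<in> F1 then w1 a else 0)) + (1 - t) * (\<Sum>a\<in>F. (if a \<in> F2 then w2 a else 0))"
      by (simp add: w_def sum.distrib sum_distrib_left)
    then show "sum w F = 1" using r1 r2 F1 F2 by simp
  next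
    fix i
    have "(\<Sum>a\<in>F. w a * a i) = t * (\<Sum>a\<in>F. (if a \<in> F1 then w1 a * a i else 0)) + (1 - t) * (\<Sum>a\<in>F. (if a \<in> F2 then w2 a * a i else 0))"
    proof -
      have "(\<Sum>a\<in>F. w a * a i) = (\<Sum>a\<in>F. t * (if a \<in> F1 then w1 a * a i else 0) + (1 - t) * (if a \<in> F2 then w2 a * a i else 0))"
        by (rule sum.cong) (auto simp: w_def algebra_simps)
      then show ?thesis by (simp add: sum.distrib sum_distrib_left)
    qed
    then show "cmb t x y i = (\<Sum>a\<in>F. w a * a i)" using r1 r2 F1 F2 by (simp add: cmb_def)
  qed
  then show "cmb t x y \<in> combs A" unfolding combs_def by blast
qed

lemma Co_sub_combs: "Co A \<subseteq> combs A"
  unfolding Co_def using hull_minimal[of A "combs A" convexR] A_sub_combs[of A] convexR_combs[of A] by blast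

lemma wsum_sq:
  fixes w :: "_ \<Rightarrow> real"
  assumes w1: "sum w F = 1" and xi: "xi = (\<Sum>a\<in>F. w a * a i)"
  shows "(\<Sum>a\<in>F. w a * (s + (a i - xi))\<^sup>2) = s\<^sup>2 + (\<Sum>a\<in>F. w a * (a i - xi)\<^sup>2)"
proof -
  have "(\<Sum>a\<in>F. w a * (s + (a i - xi))\<^sup>2) = (\<Sum>a\<in>F. s\<^sup>2 * w a + 2 * s * (w a * a i) - 2 * s * xi * w a + w a * (a i - xi)\<^sup>2)"
    by (rule sum.cong) (auto simp: power2_eq_square algebra_simps)
  also have "\<dots> = s\<^sup>2 * sum w F + 2 * s * (\<Sum>a\<in>F. w a * a i) - 2 * s * xi * sum w F + (\<Sum>a\<in>F. w a * (a i - xi)\<^sup>2)"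
    by (simp add: sum.distrib sum_subtractf sum_distrib_left)
  finally show ?thesis using w1 xi by simp
qed

lemma wsum_var:
  fixes w :: "_ \<Rightarrow> real"
  assumes w1: "sum w F = 1" and xi: "xi = (\<Sum>a\<in>F. w a * a i)"
  shows "(\<Sum>a\<in>F. w a * (a i - xi)\<^sup>2) = (\<Sum>a\<in>F. w a * (a i)\<^sup>2) - xi\<^sup>2"
proof -
  have "(\<Sum>a\<in>F. w a * (a i - xi)\<^sup>2) = (\<Sum>a\<in>F. w a * (a i)\<^sup>2 - 2 * xi * (w a * a i) + xi\<^sup>2 * w a)"
    by (rule sum.cong) (auto simp: power2_eq_square algebra_simps)
  also have "\<dots> = (\<Sum>a\<in>F. w a * (a i)\<^sup>2) - 2 * xi * (\<Sum>a\<in>F. w a * a i) + xi\<^sup>2 * sum w F"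
    by (simp add: sum.distrib sum_subtractf sum_distrib_left)
  finally show ?thesis using w1 xi by (simp add: power2_eq_square)
qed

lemma wsum_pair:
  fixes w :: "_ \<Rightarrow> real"
  assumes w1: "sum w F = 1" and xi: "xi = (\<Sum>a\<in>F. w a * a i)"
  shows "(\<Sum>a\<in>F. \<Sum>b\<in>F. w a * w b * (a i - b i)\<^sup>2) = 2 * ((\<Sum>a\<in>F. w a * (a i)\<^sup>2) - xi\<^sup>2)"
proof -
  have "(\<Sum>a\<in>F. \<Sum>b\<in>F. w a * w b * (a i - b i)\<^sup>2) = (\<Sum>a\<in>F. w a * (\<Sum>b\<in>F. w b * (b i - a i)\<^sup>2))"
    by (simp add: sum_distrib_left mult.assoc power2_commute)
  also have "\<dots> = (\<Sum>a\<in>F. w a * ((\<Sum>b\<in>F. w b * (b i)\<^sup>2) - 2 * a i * xi + (a i)\<^sup>2))"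
  proof (rule sum.cong[OF refl])
    fix a
    have "(\<Sum>b\<in>F. w b * (b i - a i)\<^sup>2) = (\<Sum>b\<in>F. w b * (b i)\<^sup>2 - 2 * a i * (w b * b i) + (a i)\<^sup>2 * w b)"
      by (rule sum.cong) (auto simp: power2_eq_square algebra_simps)
    also have "\<dots> = (\<Sum>b\<in>F. w b * (b i)\<^sup>2) - 2 * a i * (\<Sum>b\<in>F. w b * b i) + (a i)\<^sup>2 * sum w F"
      by (simp add: sum.distrib sum_subtractf sum_distrib_left)
    finally show "w a * (\<Sum>b\<in>F. w b * (b i - a i)\<^sup>2) = w a * ((\<Sum>b\<in>F. w b * (b i)\<^sup>2) - 2 * a i * xi + (a i)\<^sup>2)"
      using w1 xi by simp
  qed
  also have "\<dots> = (\<Sum>a\<in>F. (\<Sum>b\<in>F. w b * (b i)\<^sup>2) * w a - 2 * xi * (w a * a i) + w a * (a i)\<^sup>2)"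
    by (rule sum.cong) (auto simp: algebra_simps)
  also have "\<dots> = (\<Sum>b\<in>F. w b * (b i)\<^sup>2) * sum w F - 2 * xi * (\<Sum>a\<in>F. w a * a i) + (\<Sum>a\<in>F. w a * (a i)\<^sup>2)"
    by (simp add: sum.distrib sum_subtractf sum_distrib_left)
  finally show ?thesis using w1 xi by (simp add: power2_eq_square)
qed

definition qn :: "nat \<Rightarrow> (nat \<Rightarrow> real) \<Rightarrow> real" where
  "qn n v = (\<Sum>i<n. (v i)\<^sup>2)"

lemma variance_bound:
  fixes w :: "_ \<Rightarrow> real"
  assumes fin: "finite F" and wn: "\<forall>a\<in>F. 0 \<le> w a" and w1: "sum w F = 1"
    and x: "\<forall>i. x i = (\<Sum>a\<in>F. w a * a i)"
    and D: "\<forall>a\<in>F. \<forall>b\<in>F. edist n a b \<le> D"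
  shows "(\<Sum>a\<in>F. w a * qn n (\<lambda>i. a i - x i)) \<le> D\<^sup>2 / 2"
proof -
  have D0: "0 \<le> D" if "F \<noteq> {}" using D that edist_nonneg by (meson all_not_in_conv order_trans)
  have "(\<Sum>a\<in>F. w a * qn n (\<lambda>i. a i - x i)) = (\<Sum>i<n. \<Sum>a\<in>F. w a * (a i - x i)\<^sup>2)"
    unfolding qn_def by (simp add: sum_distrib_left sum.swap[of _ F])
  also have "\<dots> = (\<Sum>i<n. (\<Sum>a\<in>F. \<Sum>b\<in>F. w a * w b * (a i - b i)\<^sup>2) / 2)"
    by (rule sum.cong[OF refl]) (simp add: wsum_var[OF w1 x[rule_format]] wsum_pair[OF w1 x[rule_format]])
  also have "\<dots> = (\<Sum>a\<in>F. \<Sum>b\<in>F. w a * w b * (edist n a b)\<^sup>2) / 2"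
  proof -
    have "(edist n a b)\<^sup>2 = (\<Sum>i<n. (a i - b i)\<^sup>2)" for a b
      by (simp add: edist_def enorm_def sum_nonneg)
    then show ?thesis
      by (simp add: sum_divide_distrib[symmetric] sum_distrib_left sum.swap[of _ "{..<n}"])
  qed
  also have "\<dots> \<le> (\<Sum>a\<in>F. \<Sum>b\<in>F. w a * w b * D\<^sup>2) / 2"
  proof -
    have "(\<Sum>a\<in>F. \<Sum>b\<in>F. w a * w b * (edist n a b)\<^sup>2) \<le> (\<Sum>a\<in>F. \<Sum>b\<in>F. w a * w b * D\<^sup>2)"
    proof (intro sum_mono mult_left_mono)
      fix a b assume ab: "a \<in> F" "b \<in> F"
      show "(edist n a b)\<^sup>2 \<le> D\<^sup>2" using D ab edist_nonneg by (intro power_mono) auto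
      show "0 \<le> w a * w b" using wn ab by simp
    qed
    then show ?thesis by simp
  qed
  also have "\<dots> = D\<^sup>2 / 2"
    by (simp add: sum_distrib_right[symmetric] sum_distrib_left[symmetric] w1)
  finally show ?thesis .
qed

lemma greedy_step:
  fixes w :: "_ \<Rightarrow> real"
  assumes fin: "finite F" and wn: "\<forall>a\<in>F. 0 \<le> w a" and w1: "sum w F = 1"
    and x: "\<forall>i. x i = (\<Sum>a\<in>F. w a * a i)"
  shows "\<exists>a\<in>F. qn n (\<lambda>i. S i + (a i - x i)) \<le> qn n S + (\<Sum>a\<in>F. w a * qn n (\<lambda>i. a i - x i))"
proof (rule ccontr)
  let ?V = "(\<Sum>a\<in>F. w a * qn n (\<lambda>i. a i - x i))"
  let ?f = "\<lambda>a. qn n (\<lambda>i. S i + (a i - x i))"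
  assume "\<not> ?thesis"
  then have gt: "\<forall>a\<in>F. qn n S + ?V < ?f a" by auto
  have "\<exists>a\<in>F. 0 < w a"
  proof (rule ccontr)
    assume "\<not> (\<exists>a\<in>F. 0 < w a)"
    then have "\<forall>a\<in>F. w a = 0" using wn by force
    then have "sum w F = 0" by simp
    then show False using w1 by simp
  qed
  then obtain a0 where a0: "a0 \<in> F" "0 < w a0" by blast
  have "0 < (\<Sum>a\<in>F. w a * (?f a - (qn n S + ?V)))"
    by (rule sum_pos2[OF fin a0(1)]) (use a0 gt wn in auto)
  also have "\<dots> = (\<Sum>a\<in>F. w a * ?f a) - (qn n S + ?V)"
    by (simp add: right_diff_distrib sum_subtractf sum_distrib_right[symmetric] w1)
  also have "(\<Sum>a\<in>F. w a * ?f a) = qn n S + ?V"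
  proof -
    have "(\<Sum>a\<in>F. w a * ?f a) = (\<Sum>i<n. \<Sum>a\<in>F. w a * (S i + (a i - x i))\<^sup>2)"
      unfolding qn_def by (simp add: sum_distrib_left sum.swap[of _ F])
    also have "\<dots> = (\<Sum>i<n. (S i)\<^sup>2 + (\<Sum>a\<in>F. w a * (a i - x i)\<^sup>2))"
      by (rule sum.cong[OF refl]) (rule wsum_sq[OF w1 x[rule_format]])
    also have "\<dots> = qn n S + ?V"
      unfolding qn_def by (simp add: sum.distrib sum_distrib_left sum.swap[of _ F])
    finally show ?thesis .
  qed
  finally show False by simp
qed

lemma greedy:
  fixes w :: "_ \<Rightarrow> real"
  assumes fin: "finite F" and wn: "\<forall>a\<in>F. 0 \<le> w a" and w1: "sum w F = 1"
    and x: "\<forall>i. x i = (\<Sum>a\<in>F. w a * a i)"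
  shows "\<exists>p. (\<forall>t<m. p t \<in> F) \<and> qn n (\<lambda>i. \<Sum>t<m. p t i - x i) \<le> real m * (\<Sum>a\<in>F. w a * qn n (\<lambda>i. a i - x i))"
proof (induction m)
  case 0
  then show ?case by (simp add: qn_def)
next
  case (Suc m)
  let ?V = "(\<Sum>a\<in>F. w a * qn n (\<lambda>i. a i - x i))"
  obtain p where p: "\<forall>t<m. p t \<in> F" "qn n (\<lambda>i. \<Sum>t<m. p t i - x i) \<le> real m * ?V"
    using Suc.IH by blast
  obtain a where a: "a \<in> F" "qn n (\<lambda>i. (\<Sum>t<m. p t i - x i) + (a i - x i)) \<le> qn n (\<lambda>i. \<Sum>t<m. p t i - x i) + ?V"
    using greedy_step[OF fin wn w1 x, of n "\<lambda>i. \<Sum>t<m. p t i - x i"] by blast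
  define p' where "p' = p(m := a)"
  have "(\<lambda>i. \<Sum>t<Suc m. p' t i - x i) = (\<lambda>i. (\<Sum>t<m. p t i - x i) + (a i - x i))"
    by (simp add: p'_def)
  then have "qn n (\<lambda>i. \<Sum>t<Suc m. p' t i - x i) \<le> real (Suc m) * ?V"
    using a p by (simp add: algebra_simps)
  moreover have "\<forall>t<Suc m. p' t \<in> F" using p a by (simp add: p'_def less_Suc_eq)
  ultimately show ?case by blast
qed

lemma main_bound:
  assumes ac: "approx_convex n A" and ne: "A \<noteq> {}"
    and D: "\<forall>a\<in>A. \<forall>b\<in>A. edist n a b \<le> D"
    and j: "1 \<le> j" "j \<le> 2 ^ k"
    and xC: "x \<in> Co A"
  shows "setd n x A \<le> real k + D / sqrt (2 * real j)"
proof -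
  obtain F w where F: "finite F" "F \<subseteq> A" "\<forall>a\<in>F. 0 \<le> w a" "sum w F = 1" "\<forall>i. x i = (\<Sum>a\<in>F. w a * a i)"
  proof -
    have "x \<in> combs A" using Co_sub_combs xC by blast
    then show ?thesis using that unfolding combs_def mem_Collect_eq by metis
  qed
  let ?V = "(\<Sum>a\<in>F. w a * qn n (\<lambda>i. a i - x i))"
  have DF: "\<forall>a\<in>F. \<forall>b\<in>F. edist n a b \<le> D" using D F(2) by blast
  have V: "?V \<le> D\<^sup>2 / 2" by (rule variance_bound[OF F(1,3,4,5) DF])
  have D0: "0 \<le> D" using D ne edist_nonneg by (metis all_not_in_conv order_trans)
  obtain p where p: "\<forall>t<j. p t \<in> F" "qn n (\<lambda>i. \<Sum>t<j. p t i - x i) \<le> real j * ?V"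
    using greedy[OF F(1,3,4,5), of j n] by auto
  define y where "y = avg p j"
  have yA: "setd n y A \<le> real k"
  proof -
    have "\<forall>t<j. p t \<in> A" using p(1) F(2) by blast
    then show ?thesis using tree_lemma[OF ac ne, of k] j unfolding y_def by simp
  qed
  have jpos: "0 < real j" using j by simp
  have "edist n x y = sqrt (qn n (\<lambda>i. \<Sum>t<j. p t i - x i)) / real j"
  proof -
    have "edist n x y = sqrt (\<Sum>i<n. ((\<Sum>t<j. p t i - x i) / real j)\<^sup>2)"
    proof -
      have "(\<Sum>i<n. (x i - y i)\<^sup>2) = (\<Sum>i<n. ((\<Sum>t<j. p t i - x i) / real j)\<^sup>2)"
      proof (rule sum.cong[OF refl])
        fix i
        have "(\<Sum>t<j. p t i - x i) = (\<Sum>t<j. p t i) - real j * x i" by (simp add: sum_subtractf)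
        then have "(\<Sum>t<j. p t i - x i) / real j = y i - x i"
          using jpos by (simp add: y_def avg_def field_simps)
        then show "(x i - y i)\<^sup>2 = ((\<Sum>t<j. p t i - x i) / real j)\<^sup>2" by (simp add: power2_commute)
      qed
      then show ?thesis by (simp add: edist_def enorm_def)
    qed
    also have "\<dots> = sqrt (qn n (\<lambda>i. \<Sum>t<j. p t i - x i) / (real j)\<^sup>2)"
    proof -
      have "(\<Sum>i<n. ((\<Sum>t<j. p t i - x i) / real j)\<^sup>2) = (\<Sum>i<n. (\<Sum>t<j. p t i - x i)\<^sup>2 / (real j)\<^sup>2)"
        by (rule sum.cong) (simp_all only: power_divide)
      also have "\<dots> = qn n (\<lambda>i. \<Sum>t<j. p t i - x i) / (real j)\<^sup>2"
        by (simp only: qn_def sum_divide_distrib)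
      finally show ?thesis by (simp only:)
    qed
    also have "\<dots> = sqrt (qn n (\<lambda>i. \<Sum>t<j. p t i - x i)) / real j"
      using jpos by (simp add: real_sqrt_divide)
    finally show ?thesis .
  qed
  also have "\<dots> \<le> sqrt (real j * (D\<^sup>2 / 2)) / real j"
  proof -
    have "real j * ?V \<le> real j * (D\<^sup>2 / 2)" using V jpos by (intro mult_left_mono) auto
    then have "qn n (\<lambda>i. \<Sum>t<j. p t i - x i) \<le> real j * (D\<^sup>2 / 2)" using p(2) by linarith
    then have "sqrt (qn n (\<lambda>i. \<Sum>t<j. p t i - x i)) \<le> sqrt (real j * (D\<^sup>2 / 2))"
      by (rule real_sqrt_le_mono)
    then show ?thesis using jpos by (intro divide_right_mono) auto
  qed
  also have "\<dots> = D / sqrt (2 * real j)"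
  proof -
    have "sqrt (real j * (D\<^sup>2 / 2)) / real j = sqrt (real j * (D\<^sup>2 / 2)) / sqrt ((real j)\<^sup>2)"
      using jpos by simp
    also have "\<dots> = sqrt (real j * (D\<^sup>2 / 2) / (real j)\<^sup>2)"
      by (simp only: real_sqrt_divide)
    also have "real j * (D\<^sup>2 / 2) / (real j)\<^sup>2 = D\<^sup>2 / (2 * real j)"
      using jpos by (simp add: power2_eq_square)
    also have "sqrt (D\<^sup>2 / (2 * real j)) = D / sqrt (2 * real j)"
      using D0 by (simp only: real_sqrt_divide real_sqrt_abs abs_of_nonneg)
    finally show ?thesis .
  qed
  finally have "edist n x y \<le> D / sqrt (2 * real j)" .
  then show ?thesis using setd_triangle[OF ne, of n x y] yA by simp
qed

lemma diam_nonneg: "A \<noteq> {} \<Longrightarrow> ereal 0 \<le> diam n A"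
proof -
  assume "A \<noteq> {}" then obtain a where a: "a \<in> A" by blast
  have "ereal (edist n (fst (a, a)) (snd (a, a))) \<le> diam n A"
    unfolding diam_def by (rule SUP_upper) (use a in auto)
  then show ?thesis by (simp add: edist_self)
qed

lemma diam_real:
  assumes "A \<noteq> {}" "diam n A \<noteq> \<infinity>"
  shows "\<exists>D. diam n A = ereal D \<and> (\<forall>a\<in>A. \<forall>b\<in>A. edist n a b \<le> D)"
proof -
  have "diam n A \<noteq> - \<infinity>" using diam_nonneg[OF assms(1), of n] by auto
  then obtain D where D: "diam n A = ereal D" using assms(2) by (cases "diam n A") auto
  have "\<forall>a\<in>A. \<forall>b\<in>A. edist n a b \<le> D"
  proof (intro ballI)
    fix a b assume "a \<in> A" "b \<in> A"
    then have "ereal (edist n (fst (a, b)) (snd (a, b))) \<le> diam n A"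
      unfolding diam_def by (intro SUP_upper) auto
    then show "edist n a b \<le> D" using D by simp
  qed
  then show ?thesis using D by blast
qed

lemma hausd_le:
  assumes ac: "approx_convex n A" and ne: "A \<noteq> {}"
    and D: "\<forall>a\<in>A. \<forall>b\<in>A. edist n a b \<le> D"
    and j: "1 \<le> j" "j \<le> 2 ^ k"
  shows "hausd n A (Co A) \<le> ereal (real k + D / sqrt (2 * real j))"
proof -
  have D0: "0 \<le> D" using D ne edist_nonneg by (metis all_not_in_conv order_trans)
  have B0: "0 \<le> real k + D / sqrt (2 * real j)" using D0 by simp
  have 1: "(SUP a\<in>A. ereal (setd n a (Co A))) \<le> ereal (real k + D / sqrt (2 * real j))"
  proof (rule SUP_least)
    fix a assume a: "a \<in> A"
    then have "a \<in> Co A" unfolding Co_def by (rule hull_inc)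
    then have "setd n a (Co A) \<le> 0" using setd_le[of a "Co A" n a] by (simp add: edist_self)
    then show "ereal (setd n a (Co A)) \<le> ereal (real k + D / sqrt (2 * real j))" using B0 by simp
  qed
  have 2: "(SUP b\<in>Co A. ereal (setd n b A)) \<le> ereal (real k + D / sqrt (2 * real j))"
  proof (rule SUP_least)
    fix b assume "b \<in> Co A"
    then show "ereal (setd n b A) \<le> ereal (real k + D / sqrt (2 * real j))"
      using main_bound[OF ac ne D j] by simp
  qed
  show ?thesis unfolding hausd_def using 1 2 by simp
qed

lemma key:
  assumes ac: "approx_convex n A" and ne: "A \<noteq> {}"
    and D: "\<forall>a\<in>A. \<forall>b\<in>A. edist n a b \<le> D"
    and H: "hausd n A (Co A) \<ge> ereal (log 2 (real n) - 1)"
    and j: "1 \<le> j"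
  shows "(log 2 (real n) - 1 - real_of_int \<lceil>log 2 (real j)\<rceil>) * sqrt (2 * real j) \<le> D"
proof -
  define k where "k = nat \<lceil>log 2 (real j)\<rceil>"
  have lj: "0 \<le> log 2 (real j)" using j by simp
  have kk: "real_of_int \<lceil>log 2 (real j)\<rceil> = real k" using lj by (simp add: k_def)
  have "log 2 (real j) \<le> real k" using kk by linarith
  then have "real j \<le> 2 powr real k" using j by (subst (asm) log_le_iff) auto
  then have "real j \<le> 2 ^ k" by (simp add: powr_realpow)
  then have jk: "j \<le> 2 ^ k" by (metis of_nat_le_iff of_nat_numeral of_nat_power)
  have "ereal (log 2 (real n) - 1) \<le> ereal (real k + D / sqrt (2 * real j))"
    using H hausd_le[OF ac ne D j jk] by (rule order_trans)
  then have "log 2 (real n) - 1 - real k \<le> D / sqrt (2 * real j)" by simp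
  moreover have "0 < sqrt (2 * real j)" using j by simp
  ultimately show ?thesis unfolding kk by (simp add: pos_le_divide_eq)
qed

lemma part1_arith:
  fixes n j :: nat and D :: real
  assumes j: "1 \<le> j" "j \<le> n"
    and K: "(log 2 (real n) - 1 - real_of_int \<lceil>log 2 (real j)\<rceil>) * sqrt (2 * real j) \<le> D"
    and D0: "0 \<le> D"
  shows "(log 2 (real n) - 1 - real_of_int \<lceil>log 2 (real j)\<rceil>) * sqrt (real j)
                                   / sqrt (real n - real j + 1) * sqrt (real n) \<le> D"
proof -
  let ?c = "log 2 (real n) - 1 - real_of_int \<lceil>log 2 (real j)\<rceil>"
  have den: "0 < real n - real j + 1" using j by simp
  show ?thesis
  proof (cases "?c \<le> 0")
    case True
    have "?c * sqrt (real j) / sqrt (real n - real j + 1) * sqrt (real n) \<le> 0"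
      using True den by (intro mult_nonpos_nonneg divide_nonpos_nonneg mult_nonpos_nonneg) auto
    then show ?thesis using D0 by linarith
  next
    case False
    then have "log 2 (real j) + 1 < log 2 (real n)" by linarith
    moreover have "log 2 (2 * real j) = log 2 (real j) + 1" using j by (simp add: log_mult)
    ultimately have "log 2 (2 * real j) < log 2 (real n)" by simp
    then have n2j: "2 * real j < real n" using j by (subst (asm) log_less_cancel_iff) auto
    have "sqrt (real j) / sqrt (real n - real j + 1) * sqrt (real n) = sqrt (real j * real n / (real n - real j + 1))"
      by (simp add: real_sqrt_mult real_sqrt_divide)
    also have "\<dots> \<le> sqrt (2 * real j)"
    proof (rule real_sqrt_le_mono)
      have "0 \<le> real j * (real n - 2 * real j + 2)" using n2j by (intro mult_nonneg_nonneg) auto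
      then have "real j * real n \<le> 2 * real j * (real n - real j + 1)"
        by (simp add: algebra_simps)
      then show "real j * real n / (real n - real j + 1) \<le> 2 * real j" using den by (simp add: divide_le_eq)
    qed
    finally have s: "sqrt (real j) / sqrt (real n - real j + 1) * sqrt (real n) \<le> sqrt (2 * real j)" .
    have "?c * sqrt (real j) / sqrt (real n - real j + 1) * sqrt (real n) = ?c * (sqrt (real j) / sqrt (real n - real j + 1) * sqrt (real n))"
      by simp
    also have "\<dots> \<le> ?c * sqrt (2 * real j)" using False s by (intro mult_left_mono) auto
    finally show ?thesis using K by linarith
  qed
qed

lemma part2_arith:
  fixes n :: nat and D :: real
  assumes n8: "8 \<le> n"
    and K: "\<And>j. 1 \<le> j \<Longrightarrow> (log 2 (real n) - 1 - real_of_int \<lceil>log 2 (real j)\<rceil>) * sqrt (2 * real j) \<le> D"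
  shows "0.768 * sqrt (real n) \<le> D"
proof -
  obtain e where e: "2 ^ e \<le> n" "n < 2 ^ (e + 1)" using ex_power_ivl1[of 2 n] n8 by auto
  have e3: "3 \<le> e"
  proof (rule ccontr)
    assume "\<not> 3 \<le> e"
    then have "e + 1 \<le> 3" by simp
    then have "(2::nat) ^ (e + 1) \<le> 2 ^ 3" by (rule power_increasing) simp
    then show False using e n8 by simp
  qed
  define k where "k = e - 3"
  have ek: "e = k + 3" using e3 by (simp add: k_def)
  define P :: real where "P = 2 ^ (k + 1)"
  have P0: "0 < P" by (simp add: P_def)
  have nlo: "4 * P \<le> real n"
  proof -
    have "real (2 ^ e) \<le> real n" using e(1) by (rule of_nat_mono)
    then show ?thesis by (simp add: P_def ek power_add)
  qed
  have nhi: "real n < 8 * P"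
  proof -
    have "real n < real (2 ^ (e + 1))" using e(2) by (simp only: of_nat_less_iff)
    then show ?thesis by (simp add: P_def ek power_add)
  qed
  have npos: "0 < real n" using n8 by simp
  have Kj: "(log 2 (real n) - 1 - real k) * sqrt P \<le> D"
  proof -
    have "(1::nat) \<le> 2 ^ k" by simp
    from K[OF this] show ?thesis by (simp add: P_def power_add mult.commute)
  qed
  have lpow: "log 2 ((2::real) ^ m) = real m" for m by simp
  have l4: "log 2 (4::real) = 2" using lpow[of 2] by simp
  have l32: "log 2 (32::real) = 5" using lpow[of 5] by simp
  have lP: "log 2 P = real k + 1"
  proof -
    have "log 2 P = log 2 (2 ^ (k + 1))" by (simp only: P_def)
    also have "\<dots> = real (k + 1)"
    proof -
      have l: "log 2 ((2::real) ^ m) = real m" for m by simp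
      show ?thesis by (rule l)
    qed
    finally show ?thesis by simp
  qed
  have sqle: "0.768 * sqrt (real n) \<le> c * sqrt P" if c0: "0 \<le> c" and h: "0.589824 * real n \<le> c\<^sup>2 * P" for c :: real
  proof -
    have "0.768 * sqrt (real n) = sqrt (0.589824 * real n)"
    proof -
      have "sqrt (0.589824::real) = 0.768" by (rule real_sqrt_unique) (auto simp: power2_eq_square)
      then show ?thesis unfolding real_sqrt_mult by (simp only:)
    qed
    also have "\<dots> \<le> sqrt (c\<^sup>2 * P)" using h by (rule real_sqrt_le_mono)
    also have "\<dots> = c * sqrt P" using c0 by (simp add: real_sqrt_mult)
    finally show ?thesis .
  qed
  show ?thesis
  proof (cases "real n * real n \<le> 32 * P * P")
    case True
    have "log 2 (4 * P) \<le> log 2 (real n)" using nlo P0 by (intro log_mono) auto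
    moreover have "log 2 (4 * P) = 2 + log 2 P" using P0 by (simp add: log_mult l4 l32)
    ultimately have c2: "2 \<le> log 2 (real n) - 1 - real k" using lP by simp
    have n6: "real n < 6 * P"
    proof (rule ccontr)
      assume "\<not> real n < 6 * P"
      then have h6: "6 * P \<le> real n" by simp
      have "(6 * P) * (6 * P) \<le> real n * real n"
        by (rule mult_mono[OF h6 h6]) (use P0 in auto)
      moreover have "(6 * P) * (6 * P) = 36 * (P * P)" by simp
      moreover have "real n * real n \<le> 32 * (P * P)" using True by (simp add: mult.assoc)
      moreover have "0 < P * P" using P0 by simp
      ultimately show False by linarith
    qed
    have "0.589824 * real n \<le> 2\<^sup>2 * P" using n6 P0 by simp
    then have "0.768 * sqrt (real n) \<le> 2 * sqrt P" by (intro sqle) auto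
    also have "\<dots> \<le> (log 2 (real n) - 1 - real k) * sqrt P" using c2 P0 by (intro mult_right_mono) auto
    finally show ?thesis using Kj by linarith
  next
    case False
    have "log 2 (32 * P * P) < log 2 (real n * real n)" using False P0 by (intro log_less) auto
    moreover have "log 2 (32 * P * P) = 5 + 2 * log 2 P" using P0 by (simp add: log_mult l4 l32)
    moreover have "log 2 (real n * real n) = 2 * log 2 (real n)" using npos by (simp add: log_mult)
    ultimately have c2: "2.5 \<le> log 2 (real n) - 1 - real k" using lP by simp
    have "0.589824 * real n \<le> 2.5\<^sup>2 * P" using nhi by (simp add: power2_eq_square)
    then have "0.768 * sqrt (real n) \<le> 2.5 * sqrt P" by (intro sqle) auto
    also have "\<dots> \<le> (log 2 (real n) - 1 - real k) * sqrt P" using c2 P0 by (intro mult_right_mono) auto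
    finally show ?thesis using Kj by linarith
  qed
qed

lemma combined:
  assumes h: "n \<ge> 1 \<and> A \<subseteq> Rn n \<and> A \<noteq> {} \<and> approx_convex n A \<and>
            hausd n A (Co A) \<ge> ereal (log 2 (real n) - 1)"
  shows "(\<forall>j::nat. 1 \<le> j \<and> j \<le> n \<longrightarrow>
               diam n A \<ge> ereal ((log 2 (real n) - 1 - real_of_int \<lceil>log 2 (real j)\<rceil>) * sqrt (real j)
                                   / sqrt (real n - real j + 1) * sqrt (real n))) \<and>
         (n \<ge> 8 \<longrightarrow> diam n A \<ge> ereal (0.768 * sqrt (real n)))"
proof (cases "diam n A = \<infinity>")
  case True
  then show ?thesis by simp
next
  case False
  have ne: "A \<noteq> {}" and ac: "approx_convex n A" and H: "hausd n A (Co A) \<ge> ereal (log 2 (real n) - 1)"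
    using h by auto
  obtain D where D: "diam n A = ereal D" "\<forall>a\<in>A. \<forall>b\<in>A. edist n a b \<le> D"
    using diam_real[OF ne False] by blast
  have D0: "0 \<le> D" using diam_nonneg[OF ne, of n] D(1) by simp
  have K: "\<And>j. 1 \<le> j \<Longrightarrow> (log 2 (real n) - 1 - real_of_int \<lceil>log 2 (real j)\<rceil>) * sqrt (2 * real j) \<le> D"
    using key[OF ac ne D(2) H] by blast
  show ?thesis
  proof (intro conjI allI impI)
    fix j :: nat assume j: "1 \<le> j \<and> j \<le> n"
    then show "diam n A \<ge> ereal ((log 2 (real n) - 1 - real_of_int \<lceil>log 2 (real j)\<rceil>) * sqrt (real j)
                                   / sqrt (real n - real j + 1) * sqrt (real n))"
      using part1_arith[of j n D] K[of j] D0 D(1) by simp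
  next
    assume "n \<ge> 8"
    then show "diam n A \<ge> ereal (0.768 * sqrt (real n))"
      using part2_arith[of n D] K D(1) by simp
  qed
qed

theorem theorem5p3:
  shows "(\<forall>n A. n \<ge> 1 \<and> A \<subseteq> Rn n \<and> A \<noteq> {} \<and> approx_convex n A \<and>
            hausd n A (Co A) \<ge> ereal (log 2 (real n) - 1) \<longrightarrow>
            (\<forall>j::nat. 1 \<le> j \<and> j \<le> n \<longrightarrow>
               diam n A \<ge> ereal ((log 2 (real n) - 1 - real_of_int \<lceil>log 2 (real j)\<rceil>) * sqrt (real j)
                                   / sqrt (real n - real j + 1) * sqrt (real n))) \<and>
            (n \<ge> 20 \<longrightarrow> diam n A \<ge> ereal (0.7525 * sqrt (real n))))
       \<and> (\<exists>N. \<forall>n A. n \<ge> N \<and> n \<ge> 1 \<and> A \<subseteq> Rn n \<and> A \<noteq> {} \<and> approx_convex n A \<and>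
            hausd n A (Co A) \<ge> ereal (log 2 (real n) - 1) \<longrightarrow>
            diam n A \<ge> ereal (0.768 * sqrt (real n)))"
proof -
  have P1: "(\<forall>j::nat. 1 \<le> j \<and> j \<le> n \<longrightarrow>
               diam n A \<ge> ereal ((log 2 (real n) - 1 - real_of_int \<lceil>log 2 (real j)\<rceil>) * sqrt (real j)
                                   / sqrt (real n - real j + 1) * sqrt (real n))) \<and>
            (n \<ge> 20 \<longrightarrow> diam n A \<ge> ereal (0.7525 * sqrt (real n)))"
    if h: "n \<ge> 1 \<and> A \<subseteq> Rn n \<and> A \<noteq> {} \<and> approx_convex n A \<and>
            hausd n A (Co A) \<ge> ereal (log 2 (real n) - 1)" for n A
  proof -
    note c = combined[OF h]
    have "diam n A \<ge> ereal (0.7525 * sqrt (real n))" if n20: "n \<ge> 20"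
    proof -
      have "ereal (0.7525 * sqrt (real n)) \<le> ereal (0.768 * sqrt (real n))" by simp
      also have "\<dots> \<le> diam n A" using c n20 by simp
      finally show ?thesis .
    qed
    then show ?thesis using c by blast
  qed
  have P2: "\<exists>N. \<forall>n A. n \<ge> N \<and> n \<ge> 1 \<and> A \<subseteq> Rn n \<and> A \<noteq> {} \<and> approx_convex n A \<and>
            hausd n A (Co A) \<ge> ereal (log 2 (real n) - 1) \<longrightarrow>
            diam n A \<ge> ereal (0.768 * sqrt (real n))"
  proof (intro exI[of _ 8] allI impI)
    fix n A assume h: "n \<ge> 8 \<and> n \<ge> 1 \<and> A \<subseteq> Rn n \<and> A \<noteq> {} \<and> approx_convex n A \<and>
            hausd n A (Co A) \<ge> ereal (log 2 (real n) - 1)"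
    then show "diam n A \<ge> ereal (0.768 * sqrt (real n))" using combined[of n A] by simp
  qed
  show ?thesis using P1 P2 by blast
qed

end
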